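(* Let $f:\{0,1\}^N\to\{0,1\}$ be a partial function, and let $\mathrm{Dom}(f)$ denote the domain of $f$. Then \[\mathrm{Q}(f)= \Omega\left(\frac{\sqrt{\mathrm{D}(f)}}{\log|\mathrm{Dom}(f)|}\right).\]
   Context: $\mathrm{D}(f)$ is the deterministic query complexity and $\mathrm{Q}(f)$ the bounded-error quantum query complexity of $f$. *)

theory Defs
  imports Complex_Main
begin

definition partial_fun_on :: "nat \<Rightarrow> (bool list \<rightharpoonup> bool) \<Rightarrow> bool" where
  "partial_fun_on N f \<longleftrightarrow> dom f \<subseteq> {xs. length xs = N}"

datatype dtree = Leaf bool | Node nat dtree dtree

fun dt_eval :: "dtree \<Rightarrow> bool list \<Rightarrow> bool" where
  "dt_eval (Leaf b) x = b"
| "dt_eval (Node i t0 t1) x = (if x ! i then dt_eval t1 x else dt_eval t0 x)"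

fun dt_depth :: "dtree \<Rightarrow> nat" where
  "dt_depth (Leaf b) = 0"
| "dt_depth (Node i t0 t1) = Suc (max (dt_depth t0) (dt_depth t1))"

fun dt_valid :: "nat \<Rightarrow> dtree \<Rightarrow> bool" where
  "dt_valid N (Leaf b) = True"
| "dt_valid N (Node i t0 t1) = (i < N \<and> dt_valid N t0 \<and> dt_valid N t1)"

definition D :: "nat \<Rightarrow> (bool list \<rightharpoonup> bool) \<Rightarrow> nat" where
  "D N f = (LEAST d. \<exists>t. dt_valid N t \<and> dt_depth t = d \<and>
                         (\<forall>x\<in>dom f. Some (dt_eval t x) = f x))"

text \<open>Square complex matrices of dimension d are represented as functions
  nat => nat => complex (entries with indices < d); vectors as nat => complex.\<close>

definition unitary_mat :: "nat \<Rightarrow> (nat \<Rightarrow> nat \<Rightarrow> complex) \<Rightarrow> bool" where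
  "unitary_mat d U \<longleftrightarrow>
     (\<forall>j<d. \<forall>k<d. (\<Sum>l<d. cnj (U l j) * U l k) = (if j = k then 1 else 0))"

definition mat_vec :: "nat \<Rightarrow> (nat \<Rightarrow> nat \<Rightarrow> complex) \<Rightarrow> (nat \<Rightarrow> complex) \<Rightarrow> (nat \<Rightarrow> complex)" where
  "mat_vec d U v = (\<lambda>j. if j < d then (\<Sum>k<d. U j k * v k) else 0)"

text \<open>The state space has dimension (N+1)*W; basis state k encodes the query
  register i = k mod (N+1) (i = 0: no query, i >= 1: query bit i-1) and
  workspace k div (N+1).  The phase query O_x maps |i,w> to (-1)^(x_(i-1)) |i,w>
  for i >= 1 and leaves |0,w> fixed.\<close>

definition query_op :: "nat \<Rightarrow> bool list \<Rightarrow> (nat \<Rightarrow> complex) \<Rightarrow> (nat \<Rightarrow> complex)" where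
  "query_op N x v = (\<lambda>k. (if k mod (N + 1) \<noteq> 0 \<and> x ! (k mod (N + 1) - 1) then -1 else 1) * v k)"

definition init_state :: "nat \<Rightarrow> complex" where
  "init_state = (\<lambda>k. if k = 0 then 1 else 0)"

text \<open>Final state of the algorithm U_T O_x ... U_1 O_x U_0 |0>, where Us = [U_1,...,U_T].\<close>

definition final_state :: "nat \<Rightarrow> nat \<Rightarrow> (nat \<Rightarrow> nat \<Rightarrow> complex) \<Rightarrow>
     (nat \<Rightarrow> nat \<Rightarrow> complex) list \<Rightarrow> bool list \<Rightarrow> (nat \<Rightarrow> complex)" where
  "final_state N W U0 Us x =
     foldl (\<lambda>v U. mat_vec ((N + 1) * W) U (query_op N x v))
           (mat_vec ((N + 1) * W) U0 init_state) Us"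

definition accept_prob :: "nat \<Rightarrow> nat \<Rightarrow> (nat \<Rightarrow> nat \<Rightarrow> complex) \<Rightarrow>
     (nat \<Rightarrow> nat \<Rightarrow> complex) list \<Rightarrow> nat set \<Rightarrow> bool list \<Rightarrow> real" where
  "accept_prob N W U0 Us Acc x = (\<Sum>k\<in>Acc. (cmod (final_state N W U0 Us x k))\<^sup>2)"

definition computes_bounded_error ::
  "nat \<Rightarrow> (bool list \<rightharpoonup> bool) \<Rightarrow> nat \<Rightarrow> (nat \<Rightarrow> nat \<Rightarrow> complex) \<Rightarrow>
   (nat \<Rightarrow> nat \<Rightarrow> complex) list \<Rightarrow> nat set \<Rightarrow> bool" where
  "computes_bounded_error N f W U0 Us Acc \<longleftrightarrow>
     W \<ge> 1 \<and> unitary_mat ((N + 1) * W) U0 \<and> (\<forall>U\<in>set Us. unitary_mat ((N + 1) * W) U) \<and>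
     Acc \<subseteq> {..<(N + 1) * W} \<and>
     (\<forall>x\<in>dom f. (f x = Some True \<longrightarrow> accept_prob N W U0 Us Acc x \<ge> 2/3) \<and>
                  (f x = Some False \<longrightarrow> accept_prob N W U0 Us Acc x \<le> 1/3))"

definition Q :: "nat \<Rightarrow> (bool list \<rightharpoonup> bool) \<Rightarrow> nat" where
  "Q N f = (LEAST T. \<exists>W U0 Us Acc. length Us = T \<and> computes_bounded_error N f W U0 Us Acc)"

end

theory Submission
  imports Defs
begin


definition nsq :: "nat \<Rightarrow> (nat \<Rightarrow> complex) \<Rightarrow> real" where
  "nsq d v = (\<Sum>k<d. (cmod (v k))^2)"

lemma nsq_nonneg: "nsq d v \<ge> 0" unfolding nsq_def by (simp add: sum_nonneg)

lemma nsq_complex: "complex_of_real (nsq d v) = (\<Sum>k<d. v k * cnj (v k))"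
  unfolding nsq_def by (simp only: of_real_sum complex_norm_square)

lemma unitary_nsq:
  assumes "unitary_mat d U"
  shows "nsq d (mat_vec d U v) = nsq d v"
proof -
  have u: "\<And>k l. k<d \<Longrightarrow> l<d \<Longrightarrow> (\<Sum>j<d. cnj (U j l) * U j k) = (if l = k then 1 else 0)"
    using assms unfolding unitary_mat_def by blast
  have "complex_of_real (nsq d (mat_vec d U v)) = (\<Sum>j<d. (\<Sum>k<d. U j k * v k) * (\<Sum>l<d. cnj (U j l) * cnj (v l)))"
    unfolding nsq_complex mat_vec_def by (simp add: cnj_sum)
  also have "\<dots> = (\<Sum>j<d. \<Sum>k<d. \<Sum>l<d. (v k * cnj (v l)) * (cnj (U j l) * U j k))"
    by (simp add: sum_product mult_ac)
  also have "\<dots> = (\<Sum>k<d. \<Sum>l<d. (v k * cnj (v l)) * (\<Sum>j<d. cnj (U j l) * U j k))"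
  proof -
    have "(\<Sum>j<d. \<Sum>k<d. \<Sum>l<d. (v k * cnj (v l)) * (cnj (U j l) * U j k)) = (\<Sum>k<d. \<Sum>j<d. \<Sum>l<d. (v k * cnj (v l)) * (cnj (U j l) * U j k))"
      by (rule sum.swap)
    also have "\<dots> = (\<Sum>k<d. \<Sum>l<d. \<Sum>j<d. (v k * cnj (v l)) * (cnj (U j l) * U j k))"
      by (intro sum.cong refl sum.swap)
    finally show ?thesis by (simp add: sum_distrib_left)
  qed
  also have "\<dots> = (\<Sum>k<d. \<Sum>l<d. (v k * cnj (v l)) * (if l = k then 1 else 0))"
    by (intro sum.cong refl) (simp add: u)
  also have "\<dots> = complex_of_real (nsq d v)"
    unfolding nsq_complex by (simp add: if_distrib cong: if_cong)
  finally show ?thesis by (simp only: of_real_eq_iff)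
qed

definition qs :: "nat \<Rightarrow> bool list \<Rightarrow> nat \<Rightarrow> complex" where
  "qs N x k = (if k mod (N + 1) \<noteq> 0 \<and> x ! (k mod (N + 1) - 1) then -1 else 1)"

lemma query_op_qs: "query_op N x v = (\<lambda>k. qs N x k * v k)"
  unfolding query_op_def qs_def by simp

lemma cmod_qs[simp]: "cmod (qs N x k) = 1"
  unfolding qs_def by simp

lemma nsq_query: "nsq d (query_op N x v) = nsq d v"
  unfolding nsq_def query_op_qs by (simp add: norm_mult)

lemma mat_vec_diff: "mat_vec d U v k - mat_vec d U w k = mat_vec d U (\<lambda>k. v k - w k) k"
  unfolding mat_vec_def by (simp add: sum_subtractf[symmetric] right_diff_distrib)

lemma sq_ineq:
  fixes p q eta :: real
  assumes "eta > 0" "p \<ge> 0" "q \<ge> 0"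
  shows "(p + q)^2 \<le> (1 + eta) * p^2 + (1 + 1/eta) * q^2"
proof -
  have "0 \<le> (eta * p - q)^2" by simp
  hence "2 * eta * p * q \<le> eta^2 * p^2 + q^2" by (simp add: power2_eq_square algebra_simps)
  hence "2 * p * q \<le> eta * p^2 + q^2 / eta" using assms
    by (simp add: field_simps power2_eq_square)
  thus ?thesis using assms by (simp add: power2_eq_square field_simps)
qed

lemma cmod_sq_ineq:
  fixes a b :: complex and eta :: real
  assumes "eta > 0"
  shows "(cmod (a + b))^2 \<le> (1 + eta) * (cmod a)^2 + (1 + 1/eta) * (cmod b)^2"
proof -
  have "(cmod (a + b))^2 \<le> (cmod a + cmod b)^2"
    by (simp add: norm_triangle_ineq power_mono)
  also have "\<dots> \<le> (1 + eta) * (cmod a)^2 + (1 + 1/eta) * (cmod b)^2"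
    by (rule sq_ineq) (use assms in auto)
  finally show ?thesis .
qed

definition st :: "nat \<Rightarrow> nat \<Rightarrow> (nat \<Rightarrow> nat \<Rightarrow> complex) \<Rightarrow>
     (nat \<Rightarrow> nat \<Rightarrow> complex) list \<Rightarrow> bool list \<Rightarrow> nat \<Rightarrow> (nat \<Rightarrow> complex)" where
  "st N W U0 Us x t = foldl (\<lambda>v U. mat_vec ((N + 1) * W) U (query_op N x v))
           (mat_vec ((N + 1) * W) U0 init_state) (take t Us)"

lemma st_0: "st N W U0 Us x 0 = mat_vec ((N + 1) * W) U0 init_state"
  unfolding st_def by simp

lemma st_Suc: "t < length Us \<Longrightarrow>
   st N W U0 Us x (Suc t) = mat_vec ((N + 1) * W) (Us ! t) (query_op N x (st N W U0 Us x t))"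
  unfolding st_def by (simp add: take_Suc_conv_app_nth)

lemma st_final: "st N W U0 Us x (length Us) = final_state N W U0 Us x"
  unfolding st_def final_state_def by simp

lemma nsq_init: "d \<ge> 1 \<Longrightarrow> nsq d init_state = 1"
proof -
  assume "d \<ge> 1"
  have "nsq d init_state = (\<Sum>k<d. if k = 0 then 1 else 0)"
    unfolding nsq_def init_state_def by (intro sum.cong) auto
  also have "\<dots> = 1" using \<open>d \<ge> 1\<close> by simp
  finally show ?thesis .
qed

lemma st_nsq:
  assumes "computes_bounded_error N f W U0 Us Acc" "t \<le> length Us"
  shows "nsq ((N + 1) * W) (st N W U0 Us x t) = 1"
  using assms(2)
proof (induction t)
  case 0
  have "(N + 1) * W \<ge> 1" using assms(1) unfolding computes_bounded_error_def by simp
  then show ?case using assms(1) unfolding computes_bounded_error_def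
    by (simp add: st_0 unitary_nsq nsq_init)
next
  case (Suc t)
  have "unitary_mat ((N + 1) * W) (Us ! t)" using assms(1) Suc.prems
    unfolding computes_bounded_error_def by auto
  then show ?case using Suc by (simp add: st_Suc unitary_nsq nsq_query)
qed

definition bad :: "nat \<Rightarrow> bool list \<Rightarrow> bool list \<Rightarrow> nat \<Rightarrow> bool" where
  "bad N x z k \<longleftrightarrow> k mod (N + 1) \<noteq> 0 \<and> x ! (k mod (N + 1) - 1) \<noteq> z ! (k mod (N + 1) - 1)"

lemma cmod_qs_diff: "cmod (qs N x k - qs N z k) = (if bad N x z k then 2 else 0)"
  unfolding qs_def bad_def by auto

definition amass where
  "amass N W U0 Us x z t = (\<Sum>k<(N + 1) * W. if bad N x z k then (cmod (st N W U0 Us z t k))^2 else 0)"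

definition edist where
  "edist N W U0 Us x z t = nsq ((N + 1) * W) (\<lambda>k. st N W U0 Us x t k - st N W U0 Us z t k)"

lemma pointwise_step:
  fixes eta :: real assumes "eta > 0"
  shows "(cmod (qs N x k * a - qs N z k * b))^2 \<le>
     (1 + eta) * (cmod (a - b))^2 + (1 + 1/eta) * (if bad N x z k then 4 * (cmod b)^2 else 0)"
proof -
  have e: "qs N x k * a - qs N z k * b = qs N x k * (a - b) + (qs N x k - qs N z k) * b"
    by (simp add: algebra_simps)
  have "(cmod (qs N x k * a - qs N z k * b))^2 \<le>
     (1 + eta) * (cmod (qs N x k * (a - b)))^2 + (1 + 1/eta) * (cmod ((qs N x k - qs N z k) * b))^2"
    unfolding e by (rule cmod_sq_ineq[OF assms])
  also have "\<dots> = (1 + eta) * (cmod (a - b))^2 + (1 + 1/eta) * (if bad N x z k then 4 * (cmod b)^2 else 0)"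
    by (simp add: norm_mult cmod_qs_diff power_mult_distrib)
  finally show ?thesis .
qed

lemma hybrid_step:
  assumes cb: "computes_bounded_error N f W U0 Us Acc" and t: "t < length Us" and eta: "eta > 0"
  shows "edist N W U0 Us x z (Suc t) \<le> (1 + eta) * edist N W U0 Us x z t + (1 + 1/eta) * 4 * amass N W U0 Us x z t"
proof -
  define d where "d = (N + 1) * W"
  define px where "px = st N W U0 Us x t"
  define pz where "pz = st N W U0 Us z t"
  have U: "unitary_mat d (Us ! t)" using cb t unfolding computes_bounded_error_def d_def by auto
  have "edist N W U0 Us x z (Suc t) = nsq d (\<lambda>k. mat_vec d (Us ! t) (query_op N x px) k - mat_vec d (Us ! t) (query_op N z pz) k)"
    unfolding edist_def d_def px_def pz_def using t by (simp add: st_Suc)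
  also have "\<dots> = nsq d (mat_vec d (Us ! t) (\<lambda>k. query_op N x px k - query_op N z pz k))"
    by (simp add: mat_vec_diff)
  also have "\<dots> = nsq d (\<lambda>k. qs N x k * px k - qs N z k * pz k)"
    by (simp add: unitary_nsq[OF U] query_op_qs)
  also have "\<dots> \<le> (\<Sum>k<d. (1 + eta) * (cmod (px k - pz k))^2 + (1 + 1/eta) * (if bad N x z k then 4 * (cmod (pz k))^2 else 0))"
    unfolding nsq_def by (intro sum_mono pointwise_step eta)
  also have "\<dots> = (1 + eta) * edist N W U0 Us x z t + (1 + 1/eta) * 4 * amass N W U0 Us x z t"
  proof -
    have "\<And>k. (1 + eta) * (cmod (px k - pz k))^2 + (1 + 1/eta) * (if bad N x z k then 4 * (cmod (pz k))^2 else 0)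
       = (1 + eta) * (cmod (px k - pz k))^2 + (1 + 1/eta) * 4 * (if bad N x z k then (cmod (pz k))^2 else 0)"
      by simp
    then have "(\<Sum>k<d. (1 + eta) * (cmod (px k - pz k))^2 + (1 + 1/eta) * (if bad N x z k then 4 * (cmod (pz k))^2 else 0))
       = (\<Sum>k<d. (1 + eta) * (cmod (px k - pz k))^2 + (1 + 1/eta) * 4 * (if bad N x z k then (cmod (pz k))^2 else 0))"
      by (intro sum.cong refl) 
    also have "\<dots> = (1 + eta) * (\<Sum>k<d. (cmod (px k - pz k))^2) + (1 + 1/eta) * 4 * (\<Sum>k<d. if bad N x z k then (cmod (pz k))^2 else 0)"
      by (simp only: sum.distrib sum_distrib_left)
    finally show ?thesis unfolding edist_def amass_def nsq_def d_def px_def pz_def .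
  qed
  finally show ?thesis .
qed

lemma hybrid_bound:
  assumes cb: "computes_bounded_error N f W U0 Us Acc" and t: "t \<le> length Us" and eta: "eta > 0"
  shows "edist N W U0 Us x z t \<le> (1 + eta)^t * ((1 + 1/eta) * 4 * (\<Sum>s<t. amass N W U0 Us x z s))"
  using t
proof (induction t)
  case 0
  then show ?case by (simp add: edist_def nsq_def st_0)
next
  case (Suc t)
  have A: "amass N W U0 Us x z t \<ge> 0" unfolding amass_def by (intro sum_nonneg) auto
  have S: "(\<Sum>s<t. amass N W U0 Us x z s) \<ge> 0" unfolding amass_def by (intro sum_nonneg) auto
  have c: "(1 + 1/eta) * 4 \<ge> 0" using eta by simp
  have p1: "(1 + eta)^t \<ge> 1" using eta by simp
  have "edist N W U0 Us x z (Suc t) \<le> (1 + eta) * edist N W U0 Us x z t + (1 + 1/eta) * 4 * amass N W U0 Us x z t"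
    using hybrid_step[OF cb _ eta] Suc.prems by simp
  also have "\<dots> \<le> (1 + eta) * ((1 + eta)^t * ((1 + 1/eta) * 4 * (\<Sum>s<t. amass N W U0 Us x z s))) + (1 + eta)^(Suc t) * ((1 + 1/eta) * 4 * amass N W U0 Us x z t)"
  proof (rule add_mono)
    show "(1 + eta) * edist N W U0 Us x z t \<le> (1 + eta) * ((1 + eta)^t * ((1 + 1/eta) * 4 * (\<Sum>s<t. amass N W U0 Us x z s)))"
      using Suc eta by (intro mult_left_mono) auto
    have "(1 + eta)^(Suc t) \<ge> 1" using eta by (simp del: power_Suc)
    then show "(1 + 1/eta) * 4 * amass N W U0 Us x z t \<le> (1 + eta)^(Suc t) * ((1 + 1/eta) * 4 * amass N W U0 Us x z t)"
      using mult_right_mono[OF \<open>(1 + eta)^(Suc t) \<ge> 1\<close> mult_nonneg_nonneg[OF c A]] by simp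
  qed
  also have "\<dots> = (1 + eta)^(Suc t) * ((1 + 1/eta) * 4 * (\<Sum>s<Suc t. amass N W U0 Us x z s))"
    by (simp add: algebra_simps)
  finally show ?case .
qed

lemma pow_le_e: "T \<ge> 1 \<Longrightarrow> (1 + 1 / real T)^T \<le> 3"
proof -
  assume T: "T \<ge> 1"
  have e1: "real T * (1 / real T) = 1" using T by simp
  have "(1 + 1 / real T)^T \<le> (exp (1 / real T))^T"
    by (intro power_mono) (auto simp: exp_ge_add_one_self add.commute)
  also have "\<dots> = exp (real T * (1 / real T))" by (rule exp_of_nat_mult[symmetric])
  also have "\<dots> = exp 1" by (simp only: e1)
  also have "\<dots> \<le> 3" by (rule exp_le)
  finally show ?thesis .
qed

lemma hybrid_final:
  assumes cb: "computes_bounded_error N f W U0 Us Acc"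
  shows "edist N W U0 Us x z (length Us) \<le> 12 * (real (length Us) + 1) * (\<Sum>s<length Us. amass N W U0 Us x z s)"
proof (cases "length Us = 0")
  case True
  then show ?thesis using hybrid_bound[OF cb, of 0 1 x z] by simp
next
  case False
  define T where "T = length Us"
  have T: "T \<ge> 1" using False T_def by (cases Us) auto
  have S: "(\<Sum>s<T. amass N W U0 Us x z s) \<ge> 0" unfolding amass_def by (intro sum_nonneg) auto
  have "edist N W U0 Us x z T \<le> (1 + 1 / real T)^T * ((1 + 1/(1 / real T)) * 4 * (\<Sum>s<T. amass N W U0 Us x z s))"
    using hybrid_bound[OF cb, of T "1 / real T" x z] T T_def False by simp
  also have "\<dots> \<le> 3 * ((1 + 1/(1 / real T)) * 4 * (\<Sum>s<T. amass N W U0 Us x z s))"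
    using pow_le_e[OF T] S by (intro mult_right_mono) auto
  also have "\<dots> = 12 * (real T + 1) * (\<Sum>s<T. amass N W U0 Us x z s)" by simp
  finally show ?thesis unfolding T_def .
qed

lemma acc_diff:
  assumes Acc: "Acc \<subseteq> {..<d}" and w: "nsq d w = 1" and eta: "eta > 0"
  shows "(\<Sum>k\<in>Acc. (cmod (v k))^2) \<le> (\<Sum>k\<in>Acc. (cmod (w k))^2) + eta + (1 + 1/eta) * nsq d (\<lambda>k. v k - w k)"
proof -
  have fin: "finite Acc" using Acc finite_subset by blast
  have Pw: "(\<Sum>k\<in>Acc. (cmod (w k))^2) \<le> 1"
    using w Acc unfolding nsq_def by (metis (no_types, lifting) finite_lessThan sum_mono2 zero_le_power2)
  have Pd: "(\<Sum>k\<in>Acc. (cmod (v k - w k))^2) \<le> nsq d (\<lambda>k. v k - w k)"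
    using Acc unfolding nsq_def by (intro sum_mono2) auto
  have "(\<Sum>k\<in>Acc. (cmod (v k))^2) \<le> (\<Sum>k\<in>Acc. (1 + eta) * (cmod (w k))^2 + (1 + 1/eta) * (cmod (v k - w k))^2)"
  proof (intro sum_mono)
    fix k
    have "(cmod (v k))^2 = (cmod (w k + (v k - w k)))^2" by simp
    also have "\<dots> \<le> (1 + eta) * (cmod (w k))^2 + (1 + 1/eta) * (cmod (v k - w k))^2"
      by (rule cmod_sq_ineq[OF eta])
    finally show "(cmod (v k))^2 \<le> (1 + eta) * (cmod (w k))^2 + (1 + 1/eta) * (cmod (v k - w k))^2" .
  qed
  also have "\<dots> = (\<Sum>k\<in>Acc. (cmod (w k))^2) + eta * (\<Sum>k\<in>Acc. (cmod (w k))^2) + (1 + 1/eta) * (\<Sum>k\<in>Acc. (cmod (v k - w k))^2)"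
    by (simp add: sum.distrib sum_distrib_left algebra_simps)
  also have "\<dots> \<le> (\<Sum>k\<in>Acc. (cmod (w k))^2) + eta * 1 + (1 + 1/eta) * nsq d (\<lambda>k. v k - w k)"
    using Pw Pd eta by (intro add_mono mult_left_mono) auto
  finally show ?thesis by simp
qed

lemma far_mass:
  assumes cb: "computes_bounded_error N f W U0 Us Acc"
    and far: "accept_prob N W U0 Us Acc x - accept_prob N W U0 Us Acc z \<ge> 1/6 \<or>
              accept_prob N W U0 Us Acc z - accept_prob N W U0 Us Acc x \<ge> 1/6"
  shows "(\<Sum>s<length Us. amass N W U0 Us x z s) \<ge> 1 / (1872 * (real (length Us) + 1))"
proof -
  define d where "d = (N + 1) * W"
  define fx where "fx = final_state N W U0 Us x"
  define fz where "fz = final_state N W U0 Us z"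
  have Acc: "Acc \<subseteq> {..<d}" using cb unfolding computes_bounded_error_def d_def by auto
  have nx: "nsq d fx = 1" using st_nsq[OF cb, of "length Us" x] unfolding fx_def d_def st_final by simp
  have nz: "nsq d fz = 1" using st_nsq[OF cb, of "length Us" z] unfolding fz_def d_def st_final by simp
  have sym: "nsq d (\<lambda>k. fz k - fx k) = nsq d (\<lambda>k. fx k - fz k)"
    unfolding nsq_def by (simp add: norm_minus_commute)
  have E: "edist N W U0 Us x z (length Us) = nsq d (\<lambda>k. fx k - fz k)"
    unfolding edist_def st_final fx_def fz_def d_def ..
  have "nsq d (\<lambda>k. fx k - fz k) \<ge> 1/156"
    using far
  proof
    assume a: "accept_prob N W U0 Us Acc x - accept_prob N W U0 Us Acc z \<ge> 1/6"
    have "accept_prob N W U0 Us Acc x \<le> accept_prob N W U0 Us Acc z + 1/12 + (1 + 1/(1/12)) * nsq d (\<lambda>k. fx k - fz k)"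
      unfolding accept_prob_def fx_def fz_def using acc_diff[OF Acc nz[unfolded fz_def], of "1/12"] by simp
    then show ?thesis using a by simp
  next
    assume a: "accept_prob N W U0 Us Acc z - accept_prob N W U0 Us Acc x \<ge> 1/6"
    have "accept_prob N W U0 Us Acc z \<le> accept_prob N W U0 Us Acc x + 1/12 + (1 + 1/(1/12)) * nsq d (\<lambda>k. fz k - fx k)"
      unfolding accept_prob_def fx_def fz_def using acc_diff[OF Acc nx[unfolded fx_def], of "1/12"] by simp
    then show ?thesis using a sym by simp
  qed
  then have "1/156 \<le> 12 * (real (length Us) + 1) * (\<Sum>s<length Us. amass N W U0 Us x z s)"
    using hybrid_final[OF cb, of x z] E by simp
  then show ?thesis by (simp add: field_simps)
qed

lemma sum_if_card:
  assumes "finite A"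
  shows "(\<Sum>x\<in>A. if P x then (c::real) else 0) = c * real (card {x\<in>A. P x})"
proof -
  have "(\<Sum>x\<in>A. if P x then c else 0) = (\<Sum>x\<in>{x\<in>A. P x}. c)"
    using sum.inter_filter[OF assms, of "\<lambda>_. c" P] by simp
  then show ?thesis by simp
qed

lemma key:
  assumes cb: "computes_bounded_error N f W U0 Us Acc"
    and fin: "finite S" and sub: "S \<subseteq> dom f"
    and t1: "\<exists>x\<in>S. f x = Some True" and t0: "\<exists>x\<in>S. f x = Some False"
  shows "length Us > 0 \<and> (\<exists>b i. i < N \<and> real (card {x\<in>S. f x = Some b \<and> x ! i \<noteq> z ! i})
            \<ge> real (card {x\<in>S. f x = Some b}) / (3744 * (real (length Us) + 1)^2))"
proof -
  define T where "T = length Us"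
  define eps :: real where "eps = 1 / (1872 * (real T + 1))"
  define pz where "pz = accept_prob N W U0 Us Acc z"
  define b where "b = (pz \<le> 1/2)"
  define Sb where "Sb = {x\<in>S. f x = Some b}"
  define d where "d = (N + 1) * W"
  define ph where "ph = st N W U0 Us z"
  have eps: "eps > 0" unfolding eps_def by simp
  have Sb_ne: "Sb \<noteq> {}" unfolding Sb_def using t1 t0 by (cases b) auto
  have finSb: "finite Sb" unfolding Sb_def using fin by simp
  have cardSb: "real (card Sb) > 0" using Sb_ne finSb by (simp add: card_gt_0_iff)
  have far: "eps \<le> (\<Sum>s<T. amass N W U0 Us x z s)" if x: "x \<in> Sb" for x
  proof -
    have xd: "x \<in> dom f" and fx: "f x = Some b" using x sub unfolding Sb_def by auto
    have P1: "f x = Some True \<longrightarrow> accept_prob N W U0 Us Acc x \<ge> 2/3"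
      and P0: "f x = Some False \<longrightarrow> accept_prob N W U0 Us Acc x \<le> 1/3"
      using cb xd unfolding computes_bounded_error_def by auto
    have "accept_prob N W U0 Us Acc x - accept_prob N W U0 Us Acc z \<ge> 1/6 \<or>
              accept_prob N W U0 Us Acc z - accept_prob N W U0 Us Acc x \<ge> 1/6"
    proof (cases b)
      case True
      then show ?thesis using P1 fx b_def pz_def by auto
    next
      case False
      then show ?thesis using P0 fx b_def pz_def by auto
    qed
    from far_mass[OF cb this] show ?thesis unfolding eps_def T_def .
  qed
  have lower: "real (card Sb) * eps \<le> (\<Sum>x\<in>Sb. \<Sum>s<T. amass N W U0 Us x z s)"
    using sum_mono[of Sb "\<lambda>_. eps" "\<lambda>x. \<Sum>s<T. amass N W U0 Us x z s"] far by (simp add: mult.commute)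
  have swap: "(\<Sum>x\<in>Sb. \<Sum>s<T. amass N W U0 Us x z s)
      = (\<Sum>s<T. \<Sum>k<d. (cmod (ph s k))^2 * real (card {x\<in>Sb. bad N x z k}))"
  proof -
    have "(\<Sum>x\<in>Sb. \<Sum>s<T. amass N W U0 Us x z s)
       = (\<Sum>x\<in>Sb. \<Sum>s<T. \<Sum>k<d. if bad N x z k then (cmod (ph s k))^2 else 0)"
      unfolding amass_def d_def ph_def ..
    also have "\<dots> = (\<Sum>s<T. \<Sum>x\<in>Sb. \<Sum>k<d. if bad N x z k then (cmod (ph s k))^2 else 0)"
      by (rule sum.swap)
    also have "\<dots> = (\<Sum>s<T. \<Sum>k<d. \<Sum>x\<in>Sb. if bad N x z k then (cmod (ph s k))^2 else 0)"
      by (intro sum.cong refl sum.swap)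
    also have "\<dots> = (\<Sum>s<T. \<Sum>k<d. (cmod (ph s k))^2 * real (card {x\<in>Sb. bad N x z k}))"
      by (intro sum.cong refl sum_if_card finSb)
    finally show ?thesis .
  qed
  have Tpos: "T > 0"
  proof (rule ccontr)
    assume "\<not> T > 0"
    then have "T = 0" by simp
    have "real (card Sb) * eps > 0" using cardSb eps by simp
    then show False using lower swap \<open>T = 0\<close> by simp
  qed
  have nrm: "(\<Sum>k<d. (cmod (ph s k))^2) = 1" if "s < T" for s
    using st_nsq[OF cb, of s z] that unfolding nsq_def d_def ph_def T_def by simp
  have ex: "\<exists>i<N. real (card {x\<in>S. f x = Some b \<and> x ! i \<noteq> z ! i}) \<ge> real (card Sb) * eps / (2 * real T)"
  proof (rule ccontr)
    assume "\<not> ?thesis"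
    then have lt: "\<And>i. i < N \<Longrightarrow> real (card {x\<in>S. f x = Some b \<and> x ! i \<noteq> z ! i}) < real (card Sb) * eps / (2 * real T)"
      by auto
    have cb2: "real (card {x\<in>Sb. bad N x z k}) \<le> real (card Sb) * eps / (2 * real T)" for k
    proof (cases "k mod (N + 1) = 0")
      case True
      then have "{x\<in>Sb. bad N x z k} = {}" unfolding bad_def by auto
      moreover have "real (card Sb) * eps / (2 * real T) \<ge> 0" using cardSb eps Tpos by simp
      ultimately show ?thesis by (simp only: card.empty of_nat_0)
    next
      case False
      define i where "i = k mod (N + 1) - 1"
      have "k mod (N + 1) < N + 1" by simp
      then have i: "i < N" unfolding i_def using False by arith
      have "{x\<in>Sb. bad N x z k} = {x\<in>S. f x = Some b \<and> x ! i \<noteq> z ! i}"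
        unfolding bad_def Sb_def i_def using False by auto
      then show ?thesis using lt[OF i] by simp
    qed
    have "(\<Sum>s<T. \<Sum>k<d. (cmod (ph s k))^2 * real (card {x\<in>Sb. bad N x z k}))
        \<le> (\<Sum>s<T. \<Sum>k<d. (cmod (ph s k))^2 * (real (card Sb) * eps / (2 * real T)))"
      by (intro sum_mono mult_left_mono cb2) auto
    also have "\<dots> = (\<Sum>s<T. (\<Sum>k<d. (cmod (ph s k))^2) * (real (card Sb) * eps / (2 * real T)))"
      by (simp only: sum_distrib_right)
    also have "\<dots> = (\<Sum>s<T. real (card Sb) * eps / (2 * real T))"
      by (intro sum.cong refl) (simp add: nrm)
    also have "\<dots> = real (card Sb) * eps / 2" using Tpos by simp
    finally have "real (card Sb) * eps \<le> real (card Sb) * eps / 2"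
      using lower swap by linarith
    then show False using cardSb eps by (simp add: mult_pos_pos)
  qed
  then obtain i where i: "i < N" and ci: "real (card {x\<in>S. f x = Some b \<and> x ! i \<noteq> z ! i}) \<ge> real (card Sb) * eps / (2 * real T)"
    by blast
  have "real (card Sb) / (3744 * (real T + 1)^2) \<le> real (card Sb) * eps / (2 * real T)"
  proof -
    have "real (card Sb) / (3744 * (real T + 1)^2) = real (card Sb) * (1 / (3744 * (real T + 1)^2))" by simp
    also have "\<dots> \<le> real (card Sb) * (eps / (2 * real T))"
    proof (intro mult_left_mono)
      have q: "eps / (2 * real T) = 1 / (3744 * (real T * (real T + 1)))"
        unfolding eps_def by (simp add: field_simps)
      have "1 / (3744 * (real T + 1)^2) \<le> 1 / (3744 * (real T * (real T + 1)))"
        by (rule frac_le) (use Tpos in \<open>auto simp: power2_eq_square\<close>)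
      then show "1 / (3744 * (real T + 1)^2) \<le> eps / (2 * real T)" by (simp only: q)
    qed simp
    finally show ?thesis by simp
  qed
  then show ?thesis using i ci Tpos unfolding T_def Sb_def by (intro conjI exI[of _ b]) auto
qed



definition maj :: "bool list set \<Rightarrow> nat \<Rightarrow> bool" where
  "maj S i \<longleftrightarrow> card S \<le> 2 * card {x\<in>S. x ! i}"

definition cls :: "bool list set \<Rightarrow> (bool list \<rightharpoonup> bool) \<Rightarrow> bool \<Rightarrow> bool list set" where
  "cls S f b = {x\<in>S. f x = Some b}"

definition pot :: "real \<Rightarrow> (bool list \<rightharpoonup> bool) \<Rightarrow> bool list set \<Rightarrow> real" where
  "pot K f S = log 2 (real (card S)) + K * (ln (real (card (cls S f True))) + ln (real (card (cls S f False))))"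

lemma leaf_case:
  assumes "S \<subseteq> dom f" "\<not> ((\<exists>x\<in>S. f x = Some True) \<and> (\<exists>x\<in>S. f x = Some False))"
  shows "\<exists>t. dt_valid N t \<and> (\<forall>x\<in>S. Some (dt_eval t x) = f x) \<and> dt_depth t = 0"
proof -
  have "\<exists>b. \<forall>x\<in>S. f x = Some b"
  proof (cases "\<exists>x\<in>S. f x = Some True")
    case True
    then have "\<forall>x\<in>S. f x \<noteq> Some False" using assms(2) by auto
    then show ?thesis using assms(1) by (intro exI[of _ True]) (auto, metis (full_types) domD subsetD)
  next
    case False
    then show ?thesis using assms(1) by (intro exI[of _ False]) (auto, metis (full_types) domD subsetD)
  qed
  then obtain b where "\<forall>x\<in>S. f x = Some b" by blast
  then show ?thesis by (intro exI[of _ "Leaf b"]) simp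
qed

lemma split_card:
  assumes "finite S"
  shows "card {x\<in>S. \<not> x ! i} + card {x\<in>S. x ! i} = card S"
proof -
  have "S = {x\<in>S. \<not> x ! i} \<union> {x\<in>S. x ! i}" by auto
  then have "card S = card ({x\<in>S. \<not> x ! i} \<union> {x\<in>S. x ! i})" by simp
  also have "\<dots> = card {x\<in>S. \<not> x ! i} + card {x\<in>S. x ! i}"
    using assms by (intro card_Un_disjoint) auto
  finally show ?thesis by simp
qed

lemma comb:
  assumes K: "K \<ge> 1"
    and H: "\<And>S. finite S \<Longrightarrow> S \<subseteq> dom f \<Longrightarrow> (\<exists>x\<in>S. f x = Some True) \<Longrightarrow> (\<exists>x\<in>S. f x = Some False) \<Longrightarrow>
            (\<exists>b i. i < N \<and> real (card {x\<in>S. f x = Some b \<and> x ! i \<noteq> maj S i}) \<ge> real (card {x\<in>S. f x = Some b}) / K)"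
  shows "finite S \<Longrightarrow> S \<subseteq> dom f \<Longrightarrow> (\<exists>x\<in>S. f x = Some True) \<Longrightarrow> (\<exists>x\<in>S. f x = Some False) \<Longrightarrow>
     \<exists>t. dt_valid N t \<and> (\<forall>x\<in>S. Some (dt_eval t x) = f x) \<and> real (dt_depth t) \<le> pot K f S"
proof (induction "card S" arbitrary: S rule: less_induct)
  case less
  note fin = less.prems(1) and sub = less.prems(2) and c1 = less.prems(3) and c0 = less.prems(4)
  obtain b i where i: "i < N" and E: "real (card {x\<in>S. f x = Some b \<and> x ! i \<noteq> maj S i}) \<ge> real (card {x\<in>S. f x = Some b}) / K"
    using H[OF fin sub c1 c0] by blast
  define z where "z = maj S i"
  have cls_ne: "card (cls S f c) \<ge> 1" for c
    using c1 c0 fin unfolding cls_def by (cases c) (auto simp: Suc_le_eq card_gt_0_iff)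
  have cardS2: "card S \<ge> 2"
  proof -
    obtain x1 x0 where "x1 \<in> S" "x0 \<in> S" "f x1 = Some True" "f x0 = Some False" using c1 c0 by blast
    then have "x1 \<noteq> x0" "{x1, x0} \<subseteq> S" by auto
    then have "card {x1, x0} \<le> card S" using fin by (intro card_mono) auto
    then show ?thesis using \<open>x1 \<noteq> x0\<close> by simp
  qed
  have pot1: "1 \<le> pot K f S"
  proof -
    have "log 2 (real (card S)) \<ge> log 2 2" using cardS2 by (subst log_le_cancel_iff) auto
    moreover have "ln (real (card (cls S f c))) \<ge> 0" for c using cls_ne[of c] by simp
    moreover have "K * (ln (real (card (cls S f True))) + ln (real (card (cls S f False)))) \<ge> 0"
      using K calculation(2) by (intro mult_nonneg_nonneg add_nonneg_nonneg) auto
    ultimately show ?thesis unfolding pot_def by simp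
  qed
  have child: "\<exists>t. dt_valid N t \<and> (\<forall>x\<in>{x\<in>S. x ! i = a}. Some (dt_eval t x) = f x) \<and> real (dt_depth t) + 1 \<le> pot K f S" for a
  proof -
    define S' where "S' = {x\<in>S. x ! i = a}"
    have S'S: "S' \<subseteq> S" unfolding S'_def by auto
    have finS': "finite S'" using fin S'S finite_subset by blast
    have subS': "S' \<subseteq> dom f" using sub S'S by auto
    show ?thesis
    proof (cases "(\<exists>x\<in>S'. f x = Some True) \<and> (\<exists>x\<in>S'. f x = Some False)")
      case False
      then obtain t where "dt_valid N t \<and> (\<forall>x\<in>S'. Some (dt_eval t x) = f x) \<and> dt_depth t = 0"
        using leaf_case[OF subS'] by blast
      then show ?thesis using pot1 unfolding S'_def by (intro exI[of _ t]) auto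
    next
      case True
      then have d1: "\<exists>x\<in>S'. f x = Some True" and d0: "\<exists>x\<in>S'. f x = Some False" by auto
      have cls'_ne: "card (cls S' f c) \<ge> 1" for c
        using d1 d0 finS' unfolding cls_def by (cases c) (auto simp: Suc_le_eq card_gt_0_iff)
      have cls_mono: "card (cls S' f c) \<le> card (cls S f c)" for c
        using fin S'S unfolding cls_def by (intro card_mono) auto
      have ln_mono: "ln (real (card (cls S' f c))) \<le> ln (real (card (cls S f c)))" for c
        using cls_mono[of c] cls'_ne[of c] by simp
      have cardS'_pos: "card S' \<ge> 1" using d1 finS' by (auto simp: Suc_le_eq card_gt_0_iff)
      have "card S' < card S \<and> pot K f S' \<le> pot K f S - 1"
      proof (cases "a = z")
        case False
        have half: "2 * card S' \<le> card S"
        proof (cases a)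
          case True
          then have "\<not> maj S i" using False z_def by simp
          then show ?thesis unfolding maj_def S'_def using True by simp
        next
          case a: False
          then have "maj S i" using False z_def by simp
          moreover have "card {x\<in>S. \<not> x ! i} + card {x\<in>S. x ! i} = card S" by (rule split_card[OF fin])
          ultimately show ?thesis unfolding maj_def S'_def using a by simp
        qed
        have lt: "card S' < card S" using half cardS'_pos by simp
        have "log 2 (real (card S')) + 1 = log 2 (2 * real (card S'))"
          using cardS'_pos by (simp add: log_mult)
        also have "\<dots> \<le> log 2 (real (card S))"
          using half cardS'_pos by (subst log_le_cancel_iff) (auto simp flip: of_nat_mult)
        finally have "log 2 (real (card S')) \<le> log 2 (real (card S)) - 1" by simp
        moreover have "K * (ln (real (card (cls S' f True))) + ln (real (card (cls S' f False))))
            \<le> K * (ln (real (card (cls S f True))) + ln (real (card (cls S f False))))"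
          using K ln_mono[of True] ln_mono[of False] by (intro mult_left_mono) auto
        ultimately show ?thesis using lt unfolding pot_def by simp
      next
        case True
        define Ex where "Ex = {x\<in>S. f x = Some b \<and> x ! i \<noteq> maj S i}"
        have Ex_dis: "cls S' f b \<inter> Ex = {}" unfolding Ex_def cls_def S'_def using True z_def by auto
        have Ex_sub: "cls S' f b \<union> Ex \<subseteq> cls S f b" unfolding Ex_def cls_def S'_def by auto
        have finE: "finite Ex" using fin unfolding Ex_def by simp
        have fincls: "finite (cls S f b)" using fin unfolding cls_def by simp
        have "card (cls S' f b) + card Ex = card (cls S' f b \<union> Ex)"
          using Ex_dis finE finS' unfolding cls_def by (subst card_Un_disjoint) auto
        also have "\<dots> \<le> card (cls S f b)" using Ex_sub fincls by (intro card_mono) auto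
        finally have cE: "card (cls S' f b) + card Ex \<le> card (cls S f b)" .
        have Eb: "real (card Ex) \<ge> real (card (cls S f b)) / K" using E unfolding Ex_def cls_def .
        define C where "C = real (card (cls S f b))"
        define C' where "C' = real (card (cls S' f b))"
        have C'pos: "C' \<ge> 1" unfolding C'_def using cls'_ne[of b] by simp
        have C'le: "C' \<le> (1 - 1/K) * C"
          using cE Eb unfolding C_def C'_def by (simp add: algebra_simps)
        have Cpos: "C > 0" unfolding C_def using cls_ne[of b] by simp
        have q: "1 - 1/K > 0"
        proof (rule ccontr)
          assume "\<not> 1 - 1/K > 0"
          then have "(1 - 1/K) * C \<le> 0" using Cpos by (simp add: mult_nonpos_nonneg)
          then show False using C'le C'pos by simp
        qed
        have "ln C' \<le> ln ((1 - 1/K) * C)" using C'le C'pos by simp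
        also have "\<dots> = ln (1 - 1/K) + ln C" using q Cpos by (rule ln_mult_pos)
        also have "\<dots> \<le> (1 - 1/K - 1) + ln C" using ln_le_minus_one[OF q] by simp
        finally have "ln C' + 1/K \<le> ln C" by simp
        then have "K * (ln C' + 1/K) \<le> K * ln C" using K by (intro mult_left_mono) auto
        then have lnb: "K * ln C' \<le> K * ln C - 1" using K by (simp add: algebra_simps)
        have Ene: "Ex \<noteq> {}"
        proof
          assume "Ex = {}"
          then have "C / K \<le> 0" using Eb unfolding C_def by simp
          then show False using Cpos K by (simp add: divide_le_0_iff)
        qed
        have "Ex \<inter> S' = {}" unfolding Ex_def S'_def using True z_def by auto
        moreover have "Ex \<subseteq> S" unfolding Ex_def by auto
        ultimately have "S' \<noteq> S" using Ene by auto
        then have lt: "card S' < card S" using S'S fin by (meson card_subset_eq not_less_iff_gr_or_eq card_mono psubsetI psubset_card_mono)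
        have lg: "log 2 (real (card S')) \<le> log 2 (real (card S))"
          using cardS'_pos card_mono[OF fin S'S] by (subst log_le_cancel_iff) auto
        have "K * (ln (real (card (cls S' f True))) + ln (real (card (cls S' f False))))
            \<le> K * (ln (real (card (cls S f True))) + ln (real (card (cls S f False)))) - 1"
        proof (cases b)
          case True
          then show ?thesis using lnb ln_mono[of False] K unfolding C_def C'_def
            by (simp add: algebra_simps) (smt (verit) mult_left_mono)
        next
          case False
          then show ?thesis using lnb ln_mono[of True] K unfolding C_def C'_def
            by (simp add: algebra_simps) (smt (verit) mult_left_mono)
        qed
        then show ?thesis using lt lg unfolding pot_def by simp
      qed
      then obtain t where "dt_valid N t \<and> (\<forall>x\<in>S'. Some (dt_eval t x) = f x) \<and> real (dt_depth t) \<le> pot K f S'"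
        using less.hyps[of S'] finS' subS' d1 d0 by blast
      then show ?thesis using \<open>card S' < card S \<and> pot K f S' \<le> pot K f S - 1\<close> unfolding S'_def
        by (intro exI[of _ t]) auto
    qed
  qed
  obtain t1 where t1: "dt_valid N t1" "\<forall>x\<in>{x\<in>S. x ! i = True}. Some (dt_eval t1 x) = f x" "real (dt_depth t1) + 1 \<le> pot K f S"
    using child[of True] by blast
  obtain t0 where t0: "dt_valid N t0" "\<forall>x\<in>{x\<in>S. x ! i = False}. Some (dt_eval t0 x) = f x" "real (dt_depth t0) + 1 \<le> pot K f S"
    using child[of False] by blast
  show ?case
  proof (intro exI[of _ "Node i t0 t1"] conjI)
    show "dt_valid N (Node i t0 t1)" using i t0 t1 by simp
    show "\<forall>x\<in>S. Some (dt_eval (Node i t0 t1) x) = f x" using t0(2) t1(2) by auto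
    show "real (dt_depth (Node i t0 t1)) \<le> pot K f S" using t0(3) t1(3) by (simp add: max_def)
  qed
qed



fun enc :: "bool list \<Rightarrow> nat" where
  "enc [] = 0"
| "enc (a # xs) = (if a then 1 else 0) + 2 * enc xs"

lemma enc_snoc: "enc (xs @ [a]) = enc xs + (if a then 2 ^ length xs else 0)"
  by (induction xs) auto

lemma enc_lt: "enc xs < 2 ^ length xs"
  by (induction xs) auto

lemma enc_inj: "length xs = length ys \<Longrightarrow> enc xs = enc ys \<Longrightarrow> xs = ys"
proof (induction xs arbitrary: ys)
  case Nil
  then show ?case by simp
next
  case (Cons a xs)
  then obtain b ys' where ys: "ys = b # ys'" by (cases ys) auto
  have "(if a then 1 else 0) + 2 * enc xs = (if b then 1 else 0) + 2 * enc ys'"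
    using Cons.prems ys by simp
  then have "a = b" "enc xs = enc ys'" by (cases a; cases b; simp; presburger)+
  then show ?case using Cons ys by simp
qed

definition ev :: "nat \<Rightarrow> complex \<Rightarrow> nat \<Rightarrow> complex" where
  "ev k c = (\<lambda>m. if m = k then c else 0)"

definition pm :: "(nat \<Rightarrow> nat) \<Rightarrow> nat \<Rightarrow> nat \<Rightarrow> complex" where
  "pm \<pi> r c = (if r = \<pi> c then 1 else 0)"

lemma pm_unitary:
  assumes "\<And>k. k < d \<Longrightarrow> \<pi> k < d" "inj_on \<pi> {..<d}"
  shows "unitary_mat d (pm \<pi>)"
  unfolding unitary_mat_def
proof (intro allI impI)
  fix j k assume j: "j < d" and k: "k < d"
  have "(\<Sum>l<d. cnj (pm \<pi> l j) * pm \<pi> l k) = (\<Sum>l<d. if l = \<pi> j then (if \<pi> j = \<pi> k then 1 else 0) else 0)"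
    unfolding pm_def by (intro sum.cong) auto
  also have "\<dots> = (if \<pi> j = \<pi> k then 1 else 0)" using assms(1)[OF j] by simp
  also have "\<dots> = (if j = k then 1 else 0)" using assms(2) j k by (auto dest: inj_onD)
  finally show "(\<Sum>l<d. cnj (pm \<pi> l j) * pm \<pi> l k) = (if j = k then 1 else 0)" .
qed

lemma mv_ev: "k < d \<Longrightarrow> mat_vec d U (ev k c) = (\<lambda>r. if r < d then U r k * c else 0)"
  unfolding mat_vec_def ev_def by (auto simp: if_distrib cong: if_cong)

lemma sum_ev: "k < d \<Longrightarrow> (\<Sum>l<d. U j l * ev k c l) = U j k * c"
  unfolding ev_def by (auto simp: if_distrib cong: if_cong)

lemma mv_ev2: "k1 < d \<Longrightarrow> k2 < d \<Longrightarrow>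
   mat_vec d U (\<lambda>m. ev k1 a m + ev k2 b m) = (\<lambda>r. if r < d then U r k1 * a + U r k2 * b else 0)"
  unfolding mat_vec_def by (rule ext) (simp only: distrib_left sum.distrib sum_ev)

lemma mv_pm_ev: "k < d \<Longrightarrow> \<pi> k < d \<Longrightarrow> mat_vec d (pm \<pi>) (ev k c) = ev (\<pi> k) c"
  by (simp add: mv_ev) (auto simp: pm_def ev_def)

lemma query_ev: "query_op N x (ev k c) = ev k (qs N x k * c)"
  unfolding query_op_qs ev_def by auto

definition hh :: complex where "hh = complex_of_real (1 / sqrt 2)"

lemma hh_sq: "hh * hh = 1 / 2"
proof -
  have r: "(1 / sqrt 2) * (1 / sqrt 2) = (1 / 2 :: real)" by (simp add: field_simps)
  show ?thesis unfolding hh_def of_real_mult[symmetric] r by simp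
qed

lemma hh_sq': "hh * (hh * x) = x / 2"
  by (simp add: mult.assoc[symmetric] hh_sq)

lemma cnj_hh[simp]: "cnj hh = hh" unfolding hh_def by simp

definition hm :: "nat \<Rightarrow> nat \<Rightarrow> nat \<Rightarrow> nat \<Rightarrow> complex" where
  "hm M p r c = (if r = c then (if r mod M = p then - hh else if r mod M = 0 then hh else 1)
     else if (r mod M = 0 \<and> c = r + p) \<or> (c mod M = 0 \<and> r = c + p) then hh else 0)"

lemma hm_sym: "hm M p r c = hm M p c r" unfolding hm_def by auto

lemma cnj_hm[simp]: "cnj (hm M p r c) = hm M p r c" unfolding hm_def by auto

lemma mod_add_p: fixes b M p :: nat shows "b mod M = 0 \<Longrightarrow> p < M \<Longrightarrow> (b + p) mod M = p"
  by (metis mod_add_left_eq add_0 mod_less)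

lemma add_p_lt: fixes a M W p :: nat assumes "a mod M = 0" "a < M * W" "p < M" shows "a + p < M * W"
proof -
  from assms(1) have "M dvd a" by (simp add: dvd_eq_mod_eq_0)
  then obtain q where q: "a = M * q" by (auto elim: dvdE)
  have "q < W" using assms(2) q by (metis mult_less_cancel1)
  have "a + p < M * (q + 1)" using q assms(3) by simp
  also have "M * (q + 1) \<le> M * W" using \<open>q < W\<close> by (intro mult_le_mono2) simp
  finally show ?thesis .
qed

lemma sub_p_mod: fixes a M p :: nat assumes "a mod M = p" shows "(a - p) mod M = 0" "p \<le> a"
proof -
  have e: "a div M * M + p = a" using div_mult_mod_eq[of a M] assms by simp
  then have "a - p = a div M * M" by linarith
  then show "(a - p) mod M = 0" by simp
  show "p \<le> a" using e by linarith
qed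

lemma colA: "0 < p \<Longrightarrow> p < M \<Longrightarrow> a mod M \<noteq> 0 \<Longrightarrow> a mod M \<noteq> p \<Longrightarrow> hm M p l a = ev a 1 l"
  unfolding hm_def ev_def using mod_add_p by auto

lemma colB: "0 < p \<Longrightarrow> p < M \<Longrightarrow> a mod M = 0 \<Longrightarrow> hm M p l a = ev a hh l + ev (a + p) hh l"
  unfolding hm_def ev_def using mod_add_p[of l M p] by auto

lemma colC: "0 < p \<Longrightarrow> p < M \<Longrightarrow> a mod M = p \<Longrightarrow> hm M p l a = ev a (- hh) l + ev (a - p) hh l"
proof -
  assume p: "0 < p" "p < M" and a: "a mod M = p"
  have ap: "a \<ge> p" using sub_p_mod[OF a] by simp
  have am: "(a - p) mod M = 0" using sub_p_mod[OF a] by simp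
  have ne: "a - p \<noteq> a" using p ap by simp
  have e: "a = (a - p) + p" using ap by simp
  consider "l = a" | "l = a - p" | "l \<noteq> a" "l \<noteq> a - p" by blast
  then show ?thesis
  proof cases
    case 1
    then show ?thesis using a ne unfolding hm_def ev_def by simp
  next
    case 2
    have "(l mod M = 0 \<and> a = l + p)" using 2 am e by simp
    then show ?thesis using 2 ne unfolding hm_def ev_def by simp
  next
    case 3
    have "\<not> (l mod M = 0 \<and> a = l + p)" using 3 by auto
    moreover have "\<not> (a mod M = 0 \<and> l = a + p)" using a p by simp
    ultimately show ?thesis using 3 unfolding hm_def ev_def by (simp only: if_False if_True) simp
  qed
qed

lemma sum_ev': "k < d \<Longrightarrow> (\<Sum>l<d. ev k c l * g l) = c * g k"
  using sum_ev[of k d "\<lambda>_ l. g l" undefined c] by (simp add: mult.commute)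

lemma hm_unitary:
  assumes p: "0 < p" "p < M"
  shows "unitary_mat (M * W) (hm M p)"
  unfolding unitary_mat_def
proof (intro allI impI)
  fix a b assume a: "a < M * W" and b: "b < M * W"
  define d where "d = M * W"
  have aux: "(\<Sum>l<d. cnj (hm M p l a) * hm M p l b) = (\<Sum>l<d. hm M p l a * hm M p l b)" by simp
  consider (Z) "a mod M = 0" | (P) "a mod M = p" | (O) "a mod M \<noteq> 0" "a mod M \<noteq> p" by blast
  then have "(\<Sum>l<d. hm M p l a * hm M p l b) = (if a = b then 1 else 0)"
  proof cases
    case Z
    have ap: "a + p < d" using add_p_lt[OF Z a p(2)] d_def by simp
    have m2: "(a + p) mod M = p" using mod_add_p[OF Z p(2)] .
    have "(\<Sum>l<d. hm M p l a * hm M p l b) = (\<Sum>l<d. ev a hh l * hm M p l b) + (\<Sum>l<d. ev (a + p) hh l * hm M p l b)"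
      by (simp add: colB[OF p Z] distrib_right sum.distrib)
    also have "\<dots> = hh * hm M p a b + hh * hm M p (a + p) b"
      using a ap d_def by (simp add: sum_ev')
    also have "\<dots> = hh * (ev a hh b + ev (a + p) hh b) + hh * (ev (a + p) (- hh) b + ev (a + p - p) hh b)"
      by (simp add: hm_sym[of M p a b] hm_sym[of M p "a + p" b] colB[OF p Z] colC[OF p m2])
    also have "\<dots> = (if a = b then 1 else 0)"
      using p by (auto simp: ev_def hh_sq hh_sq' algebra_simps)
    finally show ?thesis .
  next
    case P
    have ap: "a \<ge> p" using sub_p_mod[OF P] by simp
    have m2: "(a - p) mod M = 0" using sub_p_mod[OF P] by simp
    have ap2: "a - p < d" using a d_def by simp
    have "(\<Sum>l<d. hm M p l a * hm M p l b) = (\<Sum>l<d. ev a (- hh) l * hm M p l b) + (\<Sum>l<d. ev (a - p) hh l * hm M p l b)"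
      by (simp add: colC[OF p P] distrib_right sum.distrib)
    also have "\<dots> = - hh * hm M p a b + hh * hm M p (a - p) b"
      using a ap2 d_def by (simp add: sum_ev')
    also have "\<dots> = - hh * (ev a (- hh) b + ev (a - p) hh b) + hh * (ev (a - p) hh b + ev (a - p + p) hh b)"
      by (simp add: hm_sym[of M p a b] hm_sym[of M p "a - p" b] colC[OF p P] colB[OF p m2])
    also have "\<dots> = (if a = b then 1 else 0)"
      using p ap by (auto simp: ev_def hh_sq hh_sq' algebra_simps)
    finally show ?thesis .
  next
    case O
    have "(\<Sum>l<d. hm M p l a * hm M p l b) = (\<Sum>l<d. ev a 1 l * hm M p l b)"
      by (simp add: colA[OF p O])
    also have "\<dots> = hm M p a b" using a d_def by (simp add: sum_ev')
    also have "\<dots> = (if a = b then 1 else 0)"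
      by (simp add: hm_sym[of M p a b] colA[OF p O] ev_def)
    finally show ?thesis .
  qed
  then show "(\<Sum>l<M * W. cnj (hm M p l a) * hm M p l b) = (if a = b then 1 else 0)"
    using aux d_def by simp
qed

lemma dm: fixes M q r :: nat assumes "r < M" shows "(M * q + r) div M = q" "(M * q + r) mod M = r"
proof -
  have M: "M > 0" using assms by simp
  show "(M * q + r) div M = q" using assms M by (simp add: add.commute[of "M * q"])
  show "(M * q + r) mod M = r" using assms M by (simp add: add.commute[of "M * q"])
qed

definition sig :: "nat \<Rightarrow> nat \<Rightarrow> nat \<Rightarrow> nat" where
  "sig M j k = (if k mod M = j + 1 \<and> k div M < 2 ^ j then M * (k div M + 2 ^ j)
     else if k mod M = 0 \<and> 2 ^ j \<le> k div M \<and> k div M < 2 ^ Suc j then M * (k div M - 2 ^ j) + (j + 1)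
     else k)"

lemma sig_lt:
  fixes M W j k :: nat
  assumes jM: "j + 1 < M" and W: "2 ^ Suc j \<le> W" and k: "k < M * W"
  shows "sig M j k < M * W"
proof -
  have M0: "M > 0" using jM by simp
  consider (A) "k mod M = j + 1 \<and> k div M < 2 ^ j"
    | (B) "\<not> (k mod M = j + 1 \<and> k div M < 2 ^ j)" "k mod M = 0 \<and> 2 ^ j \<le> k div M \<and> k div M < 2 ^ Suc j"
    | (C) "\<not> (k mod M = j + 1 \<and> k div M < 2 ^ j)" "\<not> (k mod M = 0 \<and> 2 ^ j \<le> k div M \<and> k div M < 2 ^ Suc j)"
    by blast
  then show ?thesis
  proof cases
    case A
    have "k div M + 2 ^ j < W" using A W by simp
    then have "M * (k div M + 2 ^ j) < M * W" using M0 by simp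
    then show ?thesis using A unfolding sig_def by simp
  next
    case B
    have "k div M - 2 ^ j + 1 \<le> W" using B W by (simp del: power_Suc) arith
    then have "M * (k div M - 2 ^ j + 1) \<le> M * W" by (rule mult_le_mono2)
    moreover have "M * (k div M - 2 ^ j) + (j + 1) < M * (k div M - 2 ^ j + 1)" using jM by simp
    ultimately show ?thesis using B unfolding sig_def by simp
  next
    case C
    have "sig M j k = k" by (simp only: sig_def if_not_P[OF C(1)] if_not_P[OF C(2)])
    then show ?thesis using k by simp
  qed
qed

lemma sig_inv:
  fixes M j k :: nat
  assumes jM: "j + 1 < M"
  shows "sig M j (sig M j k) = k"
proof -
  have M0: "M > 0" using jM by simp
  consider (A) "k mod M = j + 1 \<and> k div M < 2 ^ j"
    | (B) "\<not> (k mod M = j + 1 \<and> k div M < 2 ^ j)" "k mod M = 0 \<and> 2 ^ j \<le> k div M \<and> k div M < 2 ^ Suc j"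
    | (C) "\<not> (k mod M = j + 1 \<and> k div M < 2 ^ j)" "\<not> (k mod M = 0 \<and> 2 ^ j \<le> k div M \<and> k div M < 2 ^ Suc j)"
    by blast
  then show ?thesis
  proof cases
    case A
    define k' where "k' = M * (k div M + 2 ^ j)"
    have s: "sig M j k = k'" using A unfolding sig_def k'_def by simp
    have m: "k' mod M = 0" "k' div M = k div M + 2 ^ j" unfolding k'_def using M0 by simp_all
    have "sig M j k' = M * (k div M) + (j + 1)" unfolding sig_def using m A jM by simp
    also have "\<dots> = k" using A div_mult_mod_eq[of k M] by (simp add: mult.commute)
    finally show ?thesis using s by simp
  next
    case B
    define k' where "k' = M * (k div M - 2 ^ j) + (j + 1)"
    have s: "sig M j k = k'" using B unfolding sig_def k'_def by simp
    have m: "k' mod M = j + 1" "k' div M = k div M - 2 ^ j" unfolding k'_def using dm[OF jM] by simp_all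
    have "k div M < 2 * 2 ^ j" using B by simp
    then have lt: "k div M - 2 ^ j < 2 ^ j" by linarith
    have "sig M j k' = M * (k div M - 2 ^ j + 2 ^ j)" unfolding sig_def using m lt by simp
    also have "\<dots> = M * (k div M)" using B by simp
    also have "\<dots> = k" using B div_mult_mod_eq[of k M] by (simp add: mult.commute)
    finally show ?thesis using s by simp
  next
    case C
    have "sig M j k = k" by (simp only: sig_def if_not_P[OF C(1)] if_not_P[OF C(2)])
    then show ?thesis by simp
  qed
qed

lemma sig_a:
  fixes M j w :: nat
  assumes "j + 1 < M" "w < 2 ^ j"
  shows "sig M j (M * w + (j + 1)) = M * (w + 2 ^ j)"
  using assms dm[OF assms(1), of w] unfolding sig_def by simp

lemma sig_b:
  fixes M j w :: nat
  assumes "j + 1 < M" "w < 2 ^ j"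
  shows "sig M j (M * w) = M * w"
  using assms unfolding sig_def by simp

lemma sig_unitary:
  fixes M W j :: nat
  assumes jM: "j + 1 < M" and W: "2 ^ Suc j \<le> W"
  shows "unitary_mat (M * W) (pm (sig M j))"
proof (rule pm_unitary)
  show "\<And>k. k < M * W \<Longrightarrow> sig M j k < M * W" using sig_lt[OF jM W] by blast
  show "inj_on (sig M j) {..<M * W}"
    by (rule inj_on_inverseI[where g = "sig M j"]) (rule sig_inv[OF jM])
qed

lemma hstep1:
  fixes M W p k :: nat
  assumes p: "0 < p" "p < M" and k: "k mod M = 0" "k < M * W"
  shows "mat_vec (M * W) (hm M p) (ev k c) = (\<lambda>r. ev k (hh * c) r + ev (k + p) (hh * c) r)"
proof -
  have kp: "k + p < M * W" using add_p_lt[OF k(1) k(2) p(2)] .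
  show ?thesis
  proof (rule ext)
    fix r
    show "mat_vec (M * W) (hm M p) (ev k c) r = ev k (hh * c) r + ev (k + p) (hh * c) r"
    proof (cases "r < M * W")
      case True
      then show ?thesis using k by (simp add: mv_ev colB[OF p k(1)]) (simp add: ev_def)
    next
      case False
      then show ?thesis using k kp by (simp add: mv_ev) (simp add: ev_def)
    qed
  qed
qed

lemma hstep2:
  fixes M W p k :: nat
  assumes p: "0 < p" "p < M" and k: "k mod M = 0" "k < M * W"
  shows "mat_vec (M * W) (hm M p) (\<lambda>r. ev k (hh * c) r + ev (k + p) ((if b then -1 else 1) * (hh * c)) r)
     = ev (if b then k + p else k) c"
proof -
  have kp: "k + p < M * W" using add_p_lt[OF k(1) k(2) p(2)] .
  have m2: "(k + p) mod M = p" using mod_add_p[OF k(1) p(2)] .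
  have ne: "k + p \<noteq> k" using p by simp
  show ?thesis
  proof (rule ext)
    fix r
    show "mat_vec (M * W) (hm M p) (\<lambda>r. ev k (hh * c) r + ev (k + p) ((if b then -1 else 1) * (hh * c)) r) r
       = ev (if b then k + p else k) c r"
    proof (cases "r < M * W")
      case True
      have "mat_vec (M * W) (hm M p) (\<lambda>r. ev k (hh * c) r + ev (k + p) ((if b then -1 else 1) * (hh * c)) r) r
          = hm M p r k * (hh * c) + hm M p r (k + p) * ((if b then -1 else 1) * (hh * c))"
        using True k kp by (simp add: mv_ev2)
      also have "\<dots> = (ev k hh r + ev (k + p) hh r) * (hh * c) + (ev (k + p) (- hh) r + ev k hh r) * ((if b then -1 else 1) * (hh * c))"
        using colB[OF p k(1), of r] colC[OF p m2, of r] by simp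
      also have "\<dots> = ev (if b then k + p else k) c r"
        using ne by (cases b) (auto simp: ev_def hh_sq' algebra_simps)
      finally show ?thesis .
    next
      case False
      then show ?thesis using k kp by (simp add: mat_vec_def ev_def)
    qed
  qed
qed

lemma query_ev2: "query_op N x (\<lambda>r. ev k A r + ev k' B r) = (\<lambda>r. ev k (qs N x k * A) r + ev k' (qs N x k' * B) r)"
  unfolding query_op_qs ev_def by (rule ext) (simp add: distrib_left)

lemma qs0: "qs N x ((N + 1) * w) = 1" by (simp only: qs_def mod_mult_self1_is_0) simp

lemma qsj: "j < N \<Longrightarrow> qs N x ((N + 1) * w + (j + 1)) = (if x ! j then -1 else 1)"
  unfolding qs_def using dm[of "j + 1" "N + 1" w] by simp

lemma block:
  assumes j: "j < N" and w: "w < 2 ^ j" and W: "W = 2 ^ N" and c: "cmod c = 1"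
  shows "\<exists>c'. cmod c' = 1 \<and> foldl (\<lambda>v U. mat_vec ((N + 1) * W) U (query_op N x v)) (ev ((N + 1) * w) c)
      [hm (N + 1) (j + 1), hm (N + 1) (j + 1), pm (sig (N + 1) j)]
      = ev ((N + 1) * (w + (if x ! j then 2 ^ j else 0))) c'"
proof -
  define M where "M = N + 1"
  define k where "k = M * w"
  define p where "p = j + 1"
  have p: "0 < p" "p < M" unfolding p_def M_def using j by simp_all
  have jM: "j + 1 < M" using j M_def by simp
  have jN: "2 ^ j < (2::nat) ^ N" using j by simp
  have wW: "w < W" using less_trans[OF w jN] W by simp
  have k1: "k mod M = 0" unfolding k_def by (rule mod_mult_self1_is_0)
  have k2: "k < M * W" unfolding k_def by (rule mult_strict_left_mono[OF wW]) (simp add: M_def)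
  note k = k1 k2
  have W2: "2 ^ Suc j \<le> W" using j W by (simp add: Suc_le_eq del: power_Suc)
  define k2 where "k2 = (if x ! j then k + p else k)"
  have k2d: "k2 < M * W" unfolding k2_def using k add_p_lt[OF k(1) k(2) p(2)] by simp
  have "query_op N x (ev k c) = ev k c" using qs0[of N x w] unfolding k_def M_def by (simp add: query_ev)
  then have s1: "mat_vec (M * W) (hm M p) (query_op N x (ev k c)) = (\<lambda>r. ev k (hh * c) r + ev (k + p) (hh * c) r)"
    using hstep1[OF p k] by simp
  have "query_op N x (\<lambda>r. ev k (hh * c) r + ev (k + p) (hh * c) r)
      = (\<lambda>r. ev k (hh * c) r + ev (k + p) ((if x ! j then -1 else 1) * (hh * c)) r)"
    unfolding query_ev2 using qs0[of N x w] qsj[OF j, of x w] unfolding k_def M_def p_def by simp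
  then have s2: "mat_vec (M * W) (hm M p) (query_op N x (\<lambda>r. ev k (hh * c) r + ev (k + p) (hh * c) r)) = ev k2 c"
    using hstep2[OF p k, of c "x ! j"] unfolding k2_def by simp
  have s3: "mat_vec (M * W) (pm (sig M j)) (query_op N x (ev k2 c)) = ev (sig M j k2) (qs N x k2 * c)"
    unfolding query_ev using k2d sig_lt[OF jM W2 k2d] by (simp add: mv_pm_ev)
  have sk2: "sig M j k2 = M * (w + (if x ! j then 2 ^ j else 0))"
    unfolding k2_def k_def p_def using sig_a[OF jM w] sig_b[OF jM w] by simp
  show ?thesis
    using s1 s2 s3 sk2 c unfolding M_def p_def k_def
    by (intro exI[of _ "qs N x k2 * c"]) (simp add: norm_mult)
qed

definition blk :: "nat \<Rightarrow> nat \<Rightarrow> (nat \<Rightarrow> nat \<Rightarrow> complex) list" where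
  "blk N j = [hm (N + 1) (j + 1), hm (N + 1) (j + 1), pm (sig (N + 1) j)]"

lemma chain:
  assumes x: "length x = N" and W: "W = 2 ^ N"
  shows "j \<le> N \<Longrightarrow> \<exists>c. cmod c = 1 \<and> foldl (\<lambda>v U. mat_vec ((N + 1) * W) U (query_op N x v)) (ev 0 1)
      (concat (map (blk N) [0..<j])) = ev ((N + 1) * enc (take j x)) c"
proof (induction j)
  case 0
  then show ?case by (intro exI[of _ 1]) simp
next
  case (Suc j)
  then obtain c where c: "cmod c = 1" and
    IH: "foldl (\<lambda>v U. mat_vec ((N + 1) * W) U (query_op N x v)) (ev 0 1) (concat (map (blk N) [0..<j])) = ev ((N + 1) * enc (take j x)) c"
    by auto
  have j: "j < N" using Suc.prems by simp
  have lt: "enc (take j x) < 2 ^ j" using enc_lt[of "take j x"] x j by simp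
  obtain c' where c': "cmod c' = 1" and
    B: "foldl (\<lambda>v U. mat_vec ((N + 1) * W) U (query_op N x v)) (ev ((N + 1) * enc (take j x)) c) (blk N j)
      = ev ((N + 1) * (enc (take j x) + (if x ! j then 2 ^ j else 0))) c'"
    using block[OF j lt W c, of x] unfolding blk_def by blast
  have e: "enc (take (Suc j) x) = enc (take j x) + (if x ! j then 2 ^ j else 0)"
    using j x by (simp add: take_Suc_conv_app_nth enc_snoc)
  show ?case using IH B c' e by (intro exI[of _ c']) simp
qed

lemma sum_ev_sq: "finite A \<Longrightarrow> (\<Sum>k\<in>A. (cmod (ev k0 c k))^2) = (if k0 \<in> A then (cmod c)^2 else 0)"
proof -
  assume fin: "finite A"
  have "(\<Sum>k\<in>A. (cmod (ev k0 c k))^2) = (\<Sum>k\<in>A. if k = k0 then (cmod c)^2 else 0)"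
    unfolding ev_def by (intro sum.cong) auto
  also have "\<dots> = (if k0 \<in> A then (cmod c)^2 else 0)" using fin by (simp add: sum.delta')
  finally show ?thesis .
qed

lemma exists_alg:
  assumes pf: "partial_fun_on N f"
  shows "\<exists>W U0 Us Acc. computes_bounded_error N f W U0 Us Acc"
proof -
  define W :: nat where "W = 2 ^ N"
  define d where "d = (N + 1) * W"
  define Us where "Us = concat (map (blk N) [0..<N])"
  define Acc where "Acc = {k. k < d \<and> k mod (N + 1) = 0 \<and> (\<exists>y. f y = Some True \<and> length y = N \<and> enc y = k div (N + 1))}"
  have W1: "W \<ge> 1" unfolding W_def by simp
  have d1: "0 < d" unfolding d_def using W1 by simp
  have U0: "unitary_mat d (pm id)" by (rule pm_unitary) auto
  have Us: "\<forall>U\<in>set Us. unitary_mat d U"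
  proof
    fix U assume "U \<in> set Us"
    then obtain j where j: "j < N" and U: "U \<in> set (blk N j)" unfolding Us_def by auto
    have h: "unitary_mat d (hm (N + 1) (j + 1))" unfolding d_def using j by (intro hm_unitary) auto
    have "2 ^ Suc j \<le> (2::nat) ^ N" using j by (intro power_increasing) auto
    then have s: "unitary_mat d (pm (sig (N + 1) j))" unfolding d_def W_def using j by (intro sig_unitary) auto
    show "unitary_mat d U" using U h s unfolding blk_def by auto
  qed
  have AccS: "Acc \<subseteq> {..<d}" unfolding Acc_def by auto
  have finAcc: "finite Acc" using AccS finite_subset by blast
  have fs: "\<exists>c. cmod c = 1 \<and> final_state N W (pm id) Us x = ev ((N + 1) * enc x) c" if lx: "length x = N" for x
  proof -
    have i: "mat_vec d (pm id) init_state = ev 0 1"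
      using mv_pm_ev[of 0 d id 1] d1 unfolding init_state_def ev_def by simp
    obtain c where "cmod c = 1" and "foldl (\<lambda>v U. mat_vec ((N + 1) * W) U (query_op N x v)) (ev 0 1)
      (concat (map (blk N) [0..<N])) = ev ((N + 1) * enc (take N x)) c"
      using chain[OF lx W_def, of N] by auto
    then show ?thesis using i lx unfolding final_state_def Us_def d_def by auto
  qed
  have main: "accept_prob N W (pm id) Us Acc x = (if f x = Some True then 1 else 0)" if xd: "x \<in> dom f" for x
  proof -
    have lx: "length x = N" using pf xd unfolding partial_fun_on_def by auto
    obtain c where c: "cmod c = 1" and F: "final_state N W (pm id) Us x = ev ((N + 1) * enc x) c"
      using fs[OF lx] by blast
    have el: "enc x < W" using enc_lt[of x] lx W_def by simp
    have kd: "(N + 1) * enc x < d" unfolding d_def by (rule mult_strict_left_mono[OF el]) simp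
    have dv: "(N + 1) * enc x div (N + 1) = enc x" by (rule nonzero_mult_div_cancel_left) simp
    have "((N + 1) * enc x \<in> Acc) = (f x = Some True)"
    proof
      assume "(N + 1) * enc x \<in> Acc"
      then obtain y where "f y = Some True" "length y = N" "enc y = enc x" unfolding Acc_def using dv by auto
      then show "f x = Some True" using enc_inj[of y x] lx by simp
    next
      assume "f x = Some True"
      moreover have "(N + 1) * enc x mod (N + 1) = 0" by (rule mod_mult_self1_is_0)
      ultimately show "(N + 1) * enc x \<in> Acc" unfolding Acc_def using kd lx dv by auto
    qed
    then show ?thesis unfolding accept_prob_def F using sum_ev_sq[OF finAcc] c by simp
  qed
  have "computes_bounded_error N f W (pm id) Us Acc"
    unfolding computes_bounded_error_def
    using W1 U0 Us AccS main unfolding d_def by auto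
  then show ?thesis by blast
qed



lemma fin_dom: "partial_fun_on N f \<Longrightarrow> finite (dom f)"
proof -
  assume "partial_fun_on N f"
  then have "dom f \<subseteq> {xs. set xs \<subseteq> (UNIV :: bool set) \<and> length xs = N}" unfolding partial_fun_on_def by auto
  moreover have "finite {xs. set xs \<subseteq> (UNIV :: bool set) \<and> length xs = N}" by (rule finite_lists_length_eq) simp
  ultimately show ?thesis by (rule finite_subset)
qed

lemma D_le: "dt_valid N t \<Longrightarrow> (\<forall>x\<in>dom f. Some (dt_eval t x) = f x) \<Longrightarrow> D N f \<le> dt_depth t"
  unfolding D_def by (rule Least_le) blast

lemma ln_le_log2: "x \<ge> 1 \<Longrightarrow> ln x \<le> log 2 x"
proof -
  assume x: "x \<ge> 1"
  have l: "ln x \<ge> 0" using x by simp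
  have l2: "0 < ln (2::real)" "ln (2::real) \<le> 1" using ln_le_minus_one[of 2] by auto
  have "ln x * ln 2 \<le> ln x * 1" using l l2 by (intro mult_left_mono) auto
  then have "ln x \<le> ln x / ln 2" using l2 by (simp add: field_simps)
  then show ?thesis by (simp add: log_def)
qed

theorem theorem3:
  shows "\<exists>c>0. \<forall>N f. partial_fun_on N f \<longrightarrow>
           real (Q N f) \<ge> c * sqrt (real (D N f)) / log 2 (real (card (dom f)))"
proof (intro exI[of _ "1/174"] conjI allI impI)
  show "(0::real) < 1/174" by simp
  fix N f assume pf: "partial_fun_on N f"
  have fin: "finite (dom f)" using fin_dom[OF pf] .
  show "real (Q N f) \<ge> 1/174 * sqrt (real (D N f)) / log 2 (real (card (dom f)))"
  proof (cases "(\<exists>x\<in>dom f. f x = Some True) \<and> (\<exists>x\<in>dom f. f x = Some False)")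
    case False
    then obtain t where "dt_valid N t \<and> (\<forall>x\<in>dom f. Some (dt_eval t x) = f x) \<and> dt_depth t = 0"
      using leaf_case[of "dom f" f N] by blast
    then have "D N f = 0" using D_le[of N t f] by simp
    then show ?thesis by simp
  next
    case True
    then have c1: "\<exists>x\<in>dom f. f x = Some True" and c0: "\<exists>x\<in>dom f. f x = Some False" by auto
    define P where "P = (\<lambda>T. \<exists>W U0 Us Acc. length Us = T \<and> computes_bounded_error N f W U0 Us Acc)"
    have exP: "\<exists>T. P T" using exists_alg[OF pf] unfolding P_def by blast
    have "P (Q N f)" unfolding Q_def P_def[symmetric] by (rule LeastI_ex[OF exP])
    then obtain W U0 Us Acc where lUs: "length Us = Q N f" and cb: "computes_bounded_error N f W U0 Us Acc"
      unfolding P_def by blast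
    define T where "T = Q N f"
    define K :: real where "K = 3744 * (real T + 1)^2"
    have Tpos: "T > 0" using key[OF cb fin subset_refl c1 c0, of "[]"] lUs T_def by simp
    have "1 \<le> (real T + 1)^2" by (rule one_le_power) simp
    then have K1: "K \<ge> 1" unfolding K_def by linarith
    have H: "\<exists>b i. i < N \<and> real (card {x\<in>S. f x = Some b \<and> x ! i \<noteq> maj S i}) \<ge> real (card {x\<in>S. f x = Some b}) / K"
      if hS: "finite S" "S \<subseteq> dom f" "\<exists>x\<in>S. f x = Some True" "\<exists>x\<in>S. f x = Some False" for S
    proof -
      obtain b i where i: "i < N" and ci: "real (card {x\<in>S. f x = Some b \<and> x ! i \<noteq> map (maj S) [0..<N] ! i})
            \<ge> real (card {x\<in>S. f x = Some b}) / (3744 * (real (length Us) + 1)^2)"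
        using key[OF cb hS, of "map (maj S) [0..<N]"] by blast
      have "map (maj S) [0..<N] ! i = maj S i" using i by simp
      then show ?thesis using i ci lUs unfolding K_def T_def by (intro exI[of _ b] exI[of _ i]) auto
    qed
    obtain t where tv: "dt_valid N t" and tc: "\<forall>x\<in>dom f. Some (dt_eval t x) = f x"
      and td: "real (dt_depth t) \<le> pot K f (dom f)"
      using comb[OF K1 H fin subset_refl c1 c0] by blast
    define L where "L = log 2 (real (card (dom f)))"
    have cardS2: "card (dom f) \<ge> 2"
    proof -
      obtain x1 x0 where "x1 \<in> dom f" "x0 \<in> dom f" "f x1 = Some True" "f x0 = Some False" using c1 c0 by blast
      then have "x1 \<noteq> x0" "{x1, x0} \<subseteq> dom f" by auto
      then have "card {x1, x0} \<le> card (dom f)" using fin by (intro card_mono) auto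
      then show ?thesis using \<open>x1 \<noteq> x0\<close> by simp
    qed
    have L1: "L \<ge> 1" unfolding L_def using cardS2 by (subst le_log_iff) auto
    have lncls: "ln (real (card (cls (dom f) f b))) \<le> L" for b
    proof -
      have "cls (dom f) f b \<subseteq> dom f" unfolding cls_def by auto
      then have "card (cls (dom f) f b) \<le> card (dom f)" using fin by (intro card_mono)
      moreover have "card (cls (dom f) f b) \<ge> 1" using c1 c0 fin unfolding cls_def
        by (cases b) (auto simp: Suc_le_eq card_gt_0_iff)
      ultimately have "ln (real (card (cls (dom f) f b))) \<le> ln (real (card (dom f)))" by simp
      also have "\<dots> \<le> L" unfolding L_def using cardS2 by (intro ln_le_log2) simp
      finally show ?thesis .
    qed
    have DK: "real (D N f) \<le> (1 + 2 * K) * L"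
    proof -
      have "real (D N f) \<le> real (dt_depth t)" using D_le[OF tv tc] by simp
      also have "\<dots> \<le> pot K f (dom f)" by (rule td)
      also have "\<dots> \<le> L + K * (L + L)" unfolding pot_def L_def[symmetric]
        using lncls[of True] lncls[of False] K1 by (intro add_mono mult_left_mono) auto
      finally show ?thesis by (simp add: algebra_simps)
    qed
    have T1: "real T \<ge> 1" using Tpos by simp
    have "1 + 2 * K \<le> 30276 * (real T)^2"
    proof -
      have "real T + 1 \<le> 2 * real T" using T1 by simp
      then have "(real T + 1)^2 \<le> (2 * real T)^2" by (rule power_mono) simp
      then have "(real T + 1)^2 \<le> 4 * (real T)^2" by (simp add: power_mult_distrib)
      moreover have "1 \<le> (real T)^2" using T1 by (simp add: one_le_power)
      ultimately show ?thesis unfolding K_def by simp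
    qed
    then have D2: "real (D N f) \<le> (174 * real T)^2 * L"
      using DK L1 by (simp add: power_mult_distrib) (smt (verit) mult_right_mono)
    have "sqrt (real (D N f)) \<le> sqrt ((174 * real T)^2 * L)" using D2 by simp
    also have "\<dots> = 174 * real T * sqrt L" using T1 L1 by (simp add: real_sqrt_mult)
    also have "\<dots> \<le> 174 * real T * L"
    proof -
      have s1: "sqrt L \<ge> 1" using L1 by simp
      have "sqrt L * 1 \<le> sqrt L * sqrt L" using s1 by (intro mult_left_mono) auto
      also have "sqrt L * sqrt L = L" using L1 by simp
      finally have "sqrt L \<le> L" by simp
      then show ?thesis using T1 by simp
    qed
    finally have "sqrt (real (D N f)) \<le> 174 * real T * L" .
    then have "1/174 * sqrt (real (D N f)) / L \<le> 1/174 * (174 * real T * L) / L"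
      using L1 by (intro divide_right_mono mult_left_mono) auto
    also have "\<dots> = real T" using L1 by simp
    finally show ?thesis unfolding L_def T_def .
  qed
qed


end
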